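(* (i) If $f(z)=z+\sum_{n=2}^\infty a_nz^n\in\mathcal{A}$ satisfies $\sum_{n=2}^\infty(2n-1)|a_n|\le1$, then $f\in\mathcal{S}^*_{car}$. (ii) For $n\in\{2,3,\ldots\}$ and $a_n\in\mathbb{C}$, the function $f_n(z)=z+a_nz^n$ belongs to $\mathcal{S}^*_{car}$ if and only if $|a_n|\le 1/(2n-1)$.
   Context: $\mathbb{D}=\{z:|z|<1\}$; $\mathcal{A}$ is the class of analytic $f$ on $\mathbb{D}$ with $f(0)=0$, $f'(0)=1$. $F\prec G$ means $F=G\circ w$ for an analytic $w:\mathbb{D}\to\mathbb{D}$ with $w(0)=0$. $\mathcal{S}^*_{car}$ is the class of $f\in\mathcal{A}$ with $zf'(z)/f(z)\prec 1+z+z^2/2$ in $\mathbb{D}$. *)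

theory Defs
  imports "HOL-Analysis.Analysis"
begin

definition class_A :: "(complex \<Rightarrow> complex) set" where
  "class_A = {f. f holomorphic_on ball 0 1 \<and> f 0 = 0 \<and> deriv f 0 = 1}"

definition subordinate :: "(complex \<Rightarrow> complex) \<Rightarrow> (complex \<Rightarrow> complex) \<Rightarrow> bool" where
  "subordinate F G \<longleftrightarrow>
     (\<exists>w. w holomorphic_on ball 0 1 \<and> w ` ball 0 1 \<subseteq> ball 0 1 \<and> w 0 = 0 \<and>
          (\<forall>z\<in>ball 0 1. F z = G (w z)))"

text \<open>The function z f'(z)/f(z), with its removable value 1 at the origin.\<close>
definition log_deriv_quot :: "(complex \<Rightarrow> complex) \<Rightarrow> complex \<Rightarrow> complex" where
  "log_deriv_quot f z = (if z = 0 then 1 else z * deriv f z / f z)"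

definition S_car :: "(complex \<Rightarrow> complex) set" where
  "S_car = {f. f \<in> class_A \<and> (\<forall>z\<in>ball 0 1 - {0}. f z \<noteq> 0) \<and>
              subordinate (log_deriv_quot f) (\<lambda>z. 1 + z + z\<^sup>2 / 2)}"

end

theory Submission
  imports Defs "HOL-Complex_Analysis.Complex_Analysis"
begin


lemma key:
  fixes f :: "complex \<Rightarrow> complex" and c :: "nat \<Rightarrow> complex" and z :: complex
  assumes fs: "\<forall>z\<in>ball 0 1. f z = z + (\<Sum>n. c n * z ^ n)"
    and c0: "c 0 = 0" and c1: "c 1 = 0"
    and smW: "summable (\<lambda>n. (2 * real n - 1) * norm (c n))"
    and sW: "(\<Sum>n. (2 * real n - 1) * norm (c n)) \<le> 1"
    and z1: "norm z < 1" and z0: "z \<noteq> 0"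
  shows "2 * norm (z * deriv f z - f z) < norm (f z)"
proof -
  define W where "W = (\<lambda>n. (2 * real n - 1) * norm (c n))"
  define r where "r = norm z"
  have r0: "0 < r" and r1: "r < 1" using z0 z1 by (auto simp: r_def)
  have cne: "c n \<noteq> 0 \<Longrightarrow> 2 \<le> n" for n using c0 c1 by (cases n; cases "n - 1"; auto)
  have W0: "0 \<le> W n" for n
    using cne[of n] by (cases "c n = 0") (auto simp: W_def)
  have Wc: "norm (c n) \<le> W n" for n
    using cne[of n] by (cases "c n = 0") (auto simp: W_def)
  have smW': "summable W" using smW by (simp add: W_def)
  have sW': "suminf W \<le> 1" using sW by (simp add: W_def)
  have smc: "summable (\<lambda>n. c n * y ^ n)" if "norm y \<le> 1" for y
  proof (rule summable_comparison_test[OF _ smW'])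
    show "\<exists>N. \<forall>n\<ge>N. norm (c n * y ^ n) \<le> W n"
    proof (intro exI allI impI)
      fix n :: nat
      have "norm (c n * y ^ n) = norm (c n) * norm y ^ n" by (simp add: norm_mult norm_power)
      also have "\<dots> \<le> norm (c n) * 1" using that by (intro mult_left_mono power_le_one) auto
      finally show "norm (c n * y ^ n) \<le> W n" using Wc[of n] by simp
    qed
  qed
  have smc1: "summable (\<lambda>n. c n * 1 ^ n)" using smc[of 1] by simp
  define F where "F = (\<Sum>n. c n * z ^ n)"
  define D where "D = (\<Sum>n. diffs c n * z ^ n)"
  have dF: "((\<lambda>x. \<Sum>n. c n * x ^ n) has_field_derivative D) (at z)"
    unfolding D_def by (rule termdiffs_strong[OF smc1]) (use z1 in simp)
  have "((\<lambda>x. x + (\<Sum>n. c n * x ^ n)) has_field_derivative 1 + D) (at z)"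
    using DERIV_add[OF DERIV_ident dF] by simp
  then have "(f has_field_derivative 1 + D) (at z)"
    by (rule has_field_derivative_transform_within_open[where S="ball 0 1"]) (use z1 fs in auto)
  then have df: "deriv f z = 1 + D" by (rule DERIV_imp_deriv)
  have fz: "f z = z + F" using fs z1 by (simp add: F_def)
  have sD: "(\<lambda>n. diffs c n * z ^ n) sums D"
    unfolding D_def
    by (rule summable_sums, rule termdiff_converges[where K=1]) (use z1 smc in auto)
  define h where "h = (\<lambda>m. of_nat m * c m * z ^ m)"
  have "(\<lambda>n. z * (diffs c n * z ^ n)) sums (z * D)" by (rule sums_mult[OF sD])
  moreover have "(\<lambda>n. z * (diffs c n * z ^ n)) = (\<lambda>n. h (n + 1))"
    by (auto simp: h_def diffs_def fun_eq_iff mult_ac)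
  ultimately have "(\<lambda>n. h (n + 1)) sums (z * D)" by simp
  then have sh: "h sums (z * D)" using sums_zero_iff_shift[of 1 h] by (simp add: h_def)
  have sF: "(\<lambda>n. c n * z ^ n) sums F" unfolding F_def using smc z1 by (simp add: summable_sums)
  define e where "e = (\<lambda>n. h n - c n * z ^ n)"
  have se: "e sums (z * D - F)" unfolding e_def by (rule sums_diff[OF sh sF])
  have eq: "z * deriv f z - f z = z * D - F" using df fz by (simp add: algebra_simps)
  have ne: "norm (e n) = (real n - 1) * norm (c n) * r ^ n" for n
  proof (cases n)
    case 0 then show ?thesis using c0 by (simp add: e_def h_def)
  next
    case (Suc m)
    have "e n = of_nat m * c n * z ^ n" by (simp add: e_def h_def Suc algebra_simps)
    then show ?thesis by (simp add: norm_mult norm_power Suc r_def)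
  qed
  have nc: "norm (c n * z ^ n) = norm (c n) * r ^ n" for n by (simp add: norm_mult norm_power r_def)
  have rn1: "r ^ n \<le> 1" for n using r0 r1 by (simp add: power_le_one)
  have Wr: "W n * r ^ n \<le> r * W n" for n
  proof (cases "c n = 0")
    case True then show ?thesis by (simp add: W_def)
  next
    case False
    then have "1 \<le> n" using cne[of n] by simp
    then have "r ^ n \<le> r ^ 1" using r0 r1 by (intro power_decreasing) auto
    then show ?thesis using W0[of n] mult_left_mono[of "r ^ n" r "W n"] by (simp add: mult.commute)
  qed
  have smWr: "summable (\<lambda>n. W n * r ^ n)"
    by (rule summable_comparison_test[OF _ smW']) (use W0 rn1 r0 in \<open>auto intro!: mult_left_le\<close>)
  have smrW: "summable (\<lambda>n. r * W n)" using smW' by (rule summable_mult)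
  have lt: "(\<Sum>n. W n * r ^ n) < r"
  proof (cases "\<exists>m. c m \<noteq> 0")
    case True
    then obtain m where m: "c m \<noteq> 0" by blast
    then have m2: "2 \<le> m" using cne by blast
    have "W m > 0" using m m2 by (simp add: W_def)
    moreover have "r ^ m < r ^ 1" using r0 r1 m2 by (intro power_strict_decreasing) auto
    ultimately have "W m * r ^ m < r * W m" by (simp add: mult.commute)
    then have "0 < (\<Sum>n. r * W n - W n * r ^ n)"
      by (intro suminf_pos2[where i=m] summable_diff smrW smWr) (use Wr in auto)
    also have "\<dots> = (\<Sum>n. r * W n) - (\<Sum>n. W n * r ^ n)" using suminf_diff[OF smrW smWr] by simp
    also have "(\<Sum>n. r * W n) = r * suminf W" by (rule suminf_mult[OF smW'])
    finally have "(\<Sum>n. W n * r ^ n) < r * suminf W" by simp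
    also have "\<dots> \<le> r" using sW' r0 by simp
    finally show ?thesis .
  next
    case False
    then have "W = (\<lambda>n. 0)" by (auto simp: W_def fun_eq_iff)
    then show ?thesis using r0 by simp
  qed
  have sme: "summable (\<lambda>n. norm (e n))"
  proof (rule summable_comparison_test[OF _ smWr], intro exI allI impI)
    fix n :: nat assume n1: "1 \<le> n"
    have p: "0 \<le> norm (c n) * r ^ n" using r0 by simp
    have "real n - 1 \<le> 2 * real n - 1" by simp
    from mult_right_mono[OF this p] n1 have "norm (e n) \<le> W n * r ^ n"
      by (simp add: ne W_def mult_ac)
    then show "norm (norm (e n)) \<le> W n * r ^ n" by simp
  qed
  have smcn: "summable (\<lambda>n. norm (c n * z ^ n))"
    by (rule summable_comparison_test[OF _ smWr]) (use nc W0 Wc r0 in \<open>auto intro!: mult_right_mono\<close>)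
  have "(\<lambda>n. 2 * norm (e n) + norm (c n * z ^ n)) = (\<lambda>n. W n * r ^ n)"
    by (auto simp: fun_eq_iff ne nc W_def algebra_simps)
  then have "(\<Sum>n. W n * r ^ n) = 2 * (\<Sum>n. norm (e n)) + (\<Sum>n. norm (c n * z ^ n))"
    using suminf_add[OF summable_mult[OF sme, of 2] smcn] suminf_mult[OF sme, of 2] by simp
  moreover have "norm (z * D - F) \<le> (\<Sum>n. norm (e n))"
    using summable_norm[OF sme] se by (simp add: sums_iff)
  moreover have "norm F \<le> (\<Sum>n. norm (c n * z ^ n))"
    using summable_norm[OF smcn] by (simp add: F_def)
  moreover have "r - norm F \<le> norm (f z)" using fz norm_triangle_ineq2[of z "-F"] 
    by (simp add: r_def)
  ultimately show ?thesis using lt unfolding eq by linarith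
qed


lemma sq_le: fixes s :: complex assumes "0 \<le> Re s" shows "norm (s - 1) ^ 2 \<le> norm (s + 1) ^ 2"
  using assms by (simp only: cmod_power2) (simp add: power2_eq_square algebra_simps)

lemma subord_lemma:
  fixes p :: "complex \<Rightarrow> complex"
  assumes hp: "p holomorphic_on ball 0 1" and p0: "p 0 = 1"
    and pb: "\<forall>z\<in>ball 0 1. norm (p z - 1) < 1/2"
  shows "subordinate p (\<lambda>z. 1 + z + z\<^sup>2 / 2)"
proof -
  define w where "w = (\<lambda>z. csqrt (2 * p z - 1) - 1)"
  have vb: "norm ((2 * p z - 1) - 1) < 1" if "z \<in> ball 0 1" for z
  proof -
    have "norm ((2 * p z - 1) - 1) = 2 * norm (p z - 1)"
      by (metis diff_diff_eq mult_2 norm_mult one_add_one right_diff_distrib' mult.right_neutral norm_numeral)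
    moreover have "norm (p z - 1) < 1/2" using pb that by blast
    ultimately show ?thesis by linarith
  qed
  have Rev: "0 < Re (2 * p z - 1)" if "z \<in> ball 0 1" for z
  proof -
    have "\<bar>Re ((2 * p z - 1) - 1)\<bar> < 1" using vb[OF that] abs_Re_le_cmod le_less_trans by blast
    then show ?thesis by simp
  qed
  have hw: "w holomorphic_on ball 0 1"
    unfolding w_def
  proof (intro holomorphic_intros hp)
    fix z :: complex assume "z \<in> ball 0 1"
    from Rev[OF this] show "2 * p z - 1 \<notin> \<real>\<^sub>\<le>\<^sub>0" by (auto simp: complex_nonpos_Reals_iff)
  qed
  have wb: "norm (w z) < 1" if "z \<in> ball 0 1" for z
  proof -
    define s where "s = csqrt (2 * p z - 1)"
    have s2: "s ^ 2 = 2 * p z - 1" by (simp add: s_def)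
    have Res: "0 \<le> Re s" unfolding s_def by (rule Re_csqrt)
    have "s ^ 2 - 1 = (s - 1) * (s + 1)" by (simp add: algebra_simps power2_eq_square)
    then have prod: "norm (s - 1) * norm (s + 1) < 1" using vb[OF that] s2 by (simp add: norm_mult)
    have "norm (s - 1) ^ 2 \<le> norm (s + 1) ^ 2"
      using Res sq_le by blast
    then have le: "norm (s - 1) \<le> norm (s + 1)" by (simp add: power_mono_iff)
    have "norm (s - 1) * norm (s - 1) \<le> norm (s - 1) * norm (s + 1)"
      by (rule mult_left_mono[OF le]) simp
    then have "norm (s - 1) * norm (s - 1) < 1" using prod by linarith
    then have "norm (s - 1) < 1"
    proof (rule contrapos_pp)
      assume "\<not> norm (s - 1) < 1"
      then have h: "1 \<le> norm (s - 1)" by simp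
      have "1 * 1 \<le> norm (s - 1) * norm (s - 1)" using h by (intro mult_mono) auto
      then show "\<not> norm (s - 1) * norm (s - 1) < 1" by simp
    qed
    then show ?thesis by (simp add: w_def s_def)
  qed
  have w0: "w 0 = 0" by (simp add: w_def p0)
  have eq: "p z = 1 + w z + (w z)\<^sup>2 / 2" for z
  proof -
    define s where "s = csqrt (2 * p z - 1)"
    have s2: "s ^ 2 = 2 * p z - 1" by (simp add: s_def)
    have wz: "w z = s - 1" by (simp add: w_def s_def)
    have "1 + (s - 1) + (s - 1)\<^sup>2 / 2 = (s ^ 2 + 1) / 2"
      by (simp add: field_simps power2_eq_square algebra_simps)
    then have "1 + w z + (w z)\<^sup>2 / 2 = (s ^ 2 + 1) / 2" by (simp add: wz)
    then show ?thesis using s2 by simp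
  qed
  show ?thesis unfolding subordinate_def
    using hw wb w0 eq by (intro exI[of _ w]) auto
qed


lemma part1:
  fixes f :: "complex \<Rightarrow> complex" and a :: "nat \<Rightarrow> complex"
  assumes fA: "f \<in> class_A"
    and fs: "\<forall>z\<in>ball 0 1. f z = z + (\<Sum>n. a (n + 2) * z ^ (n + 2))"
    and sm: "summable (\<lambda>n. (2 * real (n + 2) - 1) * norm (a (n + 2)))"
    and le: "(\<Sum>n. (2 * real (n + 2) - 1) * norm (a (n + 2))) \<le> 1"
  shows "f \<in> S_car"
proof -
  define c where "c = (\<lambda>n. if 2 \<le> n then a n else 0)"
  have c0: "c 0 = 0" and c1: "c 1 = 0" and c1s: "c (Suc 0) = 0" by (auto simp: c_def)
  define W where "W = (\<lambda>n. (2 * real n - 1) * norm (c n))"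
  have Wsh: "(\<lambda>n. W (n + 2)) = (\<lambda>n. (2 * real (n + 2) - 1) * norm (a (n + 2)))"
    by (auto simp: W_def c_def fun_eq_iff)
  have smW: "summable W" using sm summable_iff_shift[of W 2] Wsh by simp
  have "(\<Sum>n. W (n + 2)) = suminf W - (\<Sum>i<2. W i)" by (rule suminf_minus_initial_segment[OF smW])
  moreover have "(\<Sum>i<2. W i) = 0" by (simp add: W_def c0 c1s numeral_2_eq_2)
  ultimately have sW: "suminf W \<le> 1" using le Wsh by simp
  have fs': "\<forall>z\<in>ball 0 1. f z = z + (\<Sum>n. c n * z ^ n)"
  proof
    fix z :: complex assume z: "z \<in> ball 0 1"
    have eqf: "(\<lambda>n. a (n + 2) * z ^ (n + 2)) = (\<lambda>n. c (n + 2) * z ^ (n + 2))"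
      by (simp add: c_def)
    have "summable (\<lambda>n. a (n + 2) * z ^ (n + 2))"
    proof (rule summable_comparison_test[OF _ sm], intro exI allI impI)
      fix n :: nat
      have "norm (a (n + 2) * z ^ (n + 2)) = norm (a (n + 2)) * norm z ^ (n + 2)"
        by (simp add: norm_mult norm_power)
      also have "\<dots> \<le> norm (a (n + 2)) * 1" using z by (intro mult_left_mono power_le_one) auto
      also have "\<dots> \<le> (2 * real (n + 2) - 1) * norm (a (n + 2))"
        using mult_right_mono[of 1 "2 * real (n + 2) - 1" "norm (a (n + 2))"] by simp
      finally show "norm (a (n + 2) * z ^ (n + 2)) \<le> (2 * real (n + 2) - 1) * norm (a (n + 2))" .
    qed
    then have smz: "summable (\<lambda>n. c n * z ^ n)"
      using summable_iff_shift[of "\<lambda>n. c n * z ^ n" 2] eqf by simp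
    have "(\<Sum>n. c (n + 2) * z ^ (n + 2)) = (\<Sum>n. c n * z ^ n) - (\<Sum>i<2. c i * z ^ i)"
      by (rule suminf_minus_initial_segment[OF smz])
    moreover have "(\<Sum>i<2. c i * z ^ i) = 0" by (simp add: c0 c1s numeral_2_eq_2)
    ultimately show "f z = z + (\<Sum>n. c n * z ^ n)" using fs z eqf by simp
  qed
  have holf: "f holomorphic_on ball 0 1" and f0: "f 0 = 0" and df0: "deriv f 0 = 1"
    using fA by (auto simp: class_A_def)
  have K: "2 * norm (z * deriv f z - f z) < norm (f z)" if "z \<in> ball 0 1" "z \<noteq> 0" for z
    by (rule key[OF fs' c0 c1]) (use smW sW that in \<open>auto simp: W_def\<close>)
  have fnz: "f z \<noteq> 0" if "z \<in> ball 0 1" "z \<noteq> 0" for z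
    using K[OF that] by auto
  define g where "g = (\<lambda>z. if z = 0 then deriv f 0 else (f z - f 0) / (z - 0))"
  have holg: "g holomorphic_on ball 0 1" unfolding g_def
    by (rule pole_lemma_open[OF holf]) simp
  have gnz: "g z \<noteq> 0" if "z \<in> ball 0 1" for z
    using fnz[OF that] by (auto simp: g_def df0 f0)
  have peq: "deriv f z / g z = log_deriv_quot f z" if "z \<in> ball 0 1" for z
    using fnz[OF that] by (auto simp: g_def df0 f0 log_deriv_quot_def field_simps)
  have holp: "log_deriv_quot f holomorphic_on ball 0 1"
  proof (rule holomorphic_transform[OF _ peq])
    show "(\<lambda>z. deriv f z / g z) holomorphic_on ball 0 1"
      by (intro holomorphic_on_divide holomorphic_deriv holf holg gnz) auto
  qed
  have pb: "\<forall>z\<in>ball 0 1. norm (log_deriv_quot f z - 1) < 1/2"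
  proof
    fix z :: complex assume z: "z \<in> ball 0 1"
    show "norm (log_deriv_quot f z - 1) < 1/2"
    proof (cases "z = 0")
      case True then show ?thesis by (simp add: log_deriv_quot_def)
    next
      case False
      have "log_deriv_quot f z - 1 = (z * deriv f z - f z) / f z"
        using False fnz[OF z False] by (simp add: log_deriv_quot_def field_simps)
      then have "norm (log_deriv_quot f z - 1) = norm (z * deriv f z - f z) / norm (f z)"
        by (simp add: norm_divide)
      also have "\<dots> < 1/2" using K[OF z False] fnz[OF z False] by (simp add: divide_simps)
      finally show ?thesis .
    qed
  qed
  have "subordinate (log_deriv_quot f) (\<lambda>z. 1 + z + z\<^sup>2 / 2)"
    by (rule subord_lemma[OF holp _ pb]) (simp add: log_deriv_quot_def)
  then show ?thesis using fA fnz by (auto simp: S_car_def)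
qed


lemma monomial_deriv:
  fixes c z :: complex and n :: nat
  shows "deriv (\<lambda>z. z + c * z ^ n) z = 1 + c * (of_nat n * z ^ (n - 1))"
  by (rule DERIV_imp_deriv) (auto intro!: derivative_eq_intros)

lemma part2_if:
  fixes c :: complex and n :: nat
  assumes n2: "2 \<le> n" and cn: "norm c \<le> 1 / (2 * real n - 1)"
  shows "(\<lambda>z. z + c * z ^ n) \<in> S_car"
proof -
  define a where "a = (\<lambda>k. if k = n then c else 0)"
  obtain k0 where nk: "n = k0 + 2" using le_Suc_ex[OF n2] by (auto simp: add.commute)
  have fA: "(\<lambda>z. z + c * z ^ n) \<in> class_A"
    using n2 by (auto simp: class_A_def monomial_deriv intro!: holomorphic_intros)
  have ser: "\<forall>z\<in>ball 0 1. z + c * z ^ n = z + (\<Sum>k. a (k + 2) * z ^ (k + 2))"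
  proof
    fix z :: complex
    have "(\<lambda>k. a (k + 2) * z ^ (k + 2)) = (\<lambda>k. if k = n - 2 then (\<lambda>_. c * z ^ n) k else 0)"
      by (auto simp: a_def fun_eq_iff nk)
    then have "(\<lambda>k. a (k + 2) * z ^ (k + 2)) sums (c * z ^ n)"
      using sums_single[of "n - 2" "\<lambda>_. c * z ^ n"] by simp
    then show "z + c * z ^ n = z + (\<Sum>k. a (k + 2) * z ^ (k + 2))" by (simp add: sums_iff)
  qed
  have "(\<lambda>k. (2 * real (k + 2) - 1) * norm (a (k + 2))) =
        (\<lambda>k. if k = n - 2 then (\<lambda>_. (2 * real n - 1) * norm c) k else 0)"
    using n2 by (auto simp: a_def fun_eq_iff)
  then have sw: "(\<lambda>k. (2 * real (k + 2) - 1) * norm (a (k + 2))) sums ((2 * real n - 1) * norm c)"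
    using sums_single[of "n - 2" "\<lambda>_. (2 * real n - 1) * norm c"] by simp
  have pos: "0 < 2 * real n - 1" using n2 by simp
  have "(2 * real n - 1) * norm c \<le> 1"
    using cn pos by (simp add: field_simps)
  then show ?thesis
    using part1[OF fA ser] sw by (simp add: sums_iff)
qed

lemma part2_only_if:
  fixes c :: complex and n :: nat
  assumes n2: "2 \<le> n" and fS: "(\<lambda>z. z + c * z ^ n) \<in> S_car"
  shows "norm c \<le> 1 / (2 * real n - 1)"
proof (rule ccontr)
  assume "\<not> ?thesis"
  then have cgt: "1 / (2 * real n - 1) < norm c" by simp
  define f where "f = (\<lambda>z::complex. z + c * z ^ n)"
  have pos: "0 < 2 * real n - 1" using n2 by simp
  have q3: "1 / (2 * real n - 1) \<le> 1 / 3"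
    using n2 pos by (simp add: field_simps)
  define s where "s = (1 / (2 * real n - 1) + min (norm c) 1) / 2"
  have s1: "1 / (2 * real n - 1) < s" and s2: "s < norm c" and s3: "s < 1"
    using cgt q3 by (auto simp: s_def min_def)
  have s0: "0 < s" using s1 pos by (smt (verit) divide_pos_pos)
  have c0: "c \<noteq> 0" using s2 s0 by auto
  define m where "m = n - 1"
  have m0: "m \<noteq> 0" and nm: "n = Suc m" using n2 by (auto simp: m_def)
  obtain z where zm: "- of_real s / c = z ^ m" using exists_complex_root[OF m0] by blast
  have czm: "c * z ^ m = - of_real s" using zm c0 by (simp add: field_simps)
  have nzm: "norm z ^ m = s / norm c"
    using arg_cong[OF zm, of norm] s0 by (simp add: norm_divide norm_power)
  have "norm z ^ m < 1" using nzm s2 s0 by (simp add: divide_less_eq)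
  then have z1: "norm z < 1" using m0 by (metis less_1_mult not_le one_le_power power_0)
  have z0: "z \<noteq> 0" using nzm s0 m0 c0 by (auto simp: zero_power)
  obtain w where w: "\<And>x. x \<in> ball 0 1 \<Longrightarrow> w x \<in> ball 0 1"
    and weq: "\<forall>x\<in>ball 0 1. log_deriv_quot f x = 1 + w x + (w x)\<^sup>2 / 2"
    using fS unfolding S_car_def subordinate_def f_def by blast
  have fz: "f z = z * (1 - of_real s)"
    using czm by (simp add: f_def nm algebra_simps)
  have dfz: "deriv f z = 1 - of_nat n * of_real s"
  proof -
    have "deriv f z = 1 + c * (of_nat n * z ^ m)" unfolding f_def monomial_deriv m_def by simp
    also have "\<dots> = 1 + of_nat n * (c * z ^ m)" by (simp add: mult_ac)
    finally show ?thesis using czm by simp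
  qed
  define x where "x = (1 - real n * s) / (1 - s)"
  have "log_deriv_quot f z = of_real x"
    using z0 s3 by (simp add: log_deriv_quot_def fz dfz x_def field_simps)
  moreover have x2: "x < 1/2"
    using s1 s3 pos by (simp add: x_def field_simps)
  ultimately have eqv: "1 + w z + (w z)\<^sup>2 / 2 = of_real x" using weq z1 by simp
  define v where "v = w z + 1"
  have "v ^ 2 = of_real (2 * x - 1)"
    using eqv by (simp add: v_def field_simps power2_eq_square algebra_simps)
  then have re: "Re v * Re v - Im v * Im v = 2 * x - 1" and im: "2 * Re v * Im v = 0"
    by (auto simp: power2_eq_square dest: arg_cong[of _ _ Re] arg_cong[of _ _ Im])
  have "Re v = 0"
  proof (rule ccontr)
    assume "Re v \<noteq> 0"
    then have "Im v = 0" using im by simp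
    then have "Re v * Re v < 0" using re x2 by simp
    then show False by (simp add: not_less)
  qed
  then have "Re (w z) = -1" by (simp add: v_def)
  then have "1 \<le> norm (w z)" using abs_Re_le_cmod[of "w z"] by simp
  moreover have "norm (w z) < 1" using w[of z] z1 by simp
  ultimately show False by simp
qed



theorem corollary3p3:
  shows "(\<forall>(f :: complex \<Rightarrow> complex) (a :: nat \<Rightarrow> complex).
            f \<in> class_A \<longrightarrow>
            (\<forall>z\<in>ball 0 1. f z = z + (\<Sum>n. a (n + 2) * z ^ (n + 2))) \<longrightarrow>
            summable (\<lambda>n. (2 * real (n + 2) - 1) * norm (a (n + 2))) \<longrightarrow>
            (\<Sum>n. (2 * real (n + 2) - 1) * norm (a (n + 2))) \<le> 1 \<longrightarrow>
            f \<in> S_car)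
       \<and> (\<forall>(n :: nat) (c :: complex). n \<ge> 2 \<longrightarrow>
            ((\<lambda>z. z + c * z ^ n) \<in> S_car \<longleftrightarrow> norm c \<le> 1 / (2 * real n - 1)))"
proof (intro conjI allI impI)
  fix f :: "complex \<Rightarrow> complex" and a :: "nat \<Rightarrow> complex"
  assume "f \<in> class_A" "\<forall>z\<in>ball 0 1. f z = z + (\<Sum>n. a (n + 2) * z ^ (n + 2))"
    "summable (\<lambda>n. (2 * real (n + 2) - 1) * norm (a (n + 2)))"
    "(\<Sum>n. (2 * real (n + 2) - 1) * norm (a (n + 2))) \<le> 1"
  then show "f \<in> S_car" by (rule part1)
next
  fix n :: nat and c :: complex
  assume "2 \<le> n"
  then show "(\<lambda>z. z + c * z ^ n) \<in> S_car \<longleftrightarrow> norm c \<le> 1 / (2 * real n - 1)"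
    using part2_if part2_only_if by blast
qed

end
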